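(* Let $\mathbf{E}\in\mathbb{K}^{m\times\sigma}$, $\mathbf{J}\in\mathbb{K}^{\sigma\times\sigma}$, $\mathbf{s}\in\mathbb{Z}^m$, and let $\boldsymbol{\delta}=(\delta_1,\dots,\delta_m)$ be the $\mathbf{s}$-minimal degree of $(\mathbf{E},\mathbf{J})$. Let $\delta=\lceil\sigma/m\rceil\ge1$; for $1\le i\le m$ write $\delta_i=(\alpha_i-1)\delta+\beta_i$ with $\alpha_i\ge1$ and $0\le\beta_i<\delta$, and let $\bar m=\alpha_1+\cdots+\alpha_m$. Define $\bar{\boldsymbol{\delta}}=(\underbrace{\delta,\dots,\delta,\beta_1}_{\alpha_1},\dots,\underbrace{\delta,\dots,\delta,\beta_m}_{\alpha_m})\in\mathbb{N}^{\bar m}$ and the block-diagonal matrix $\mathcal{E}\in\mathbb{K}[X]^{\bar m\times m}$ whose $i$-th diagonal block is the column $[1,X^{\delta},X^{2\delta},\dots,X^{(\alpha_i-1)\delta}]^{\mathsf T}$. Let $\mathbf{d}=-\bar{\boldsymbol{\delta}}\in\mathbb{Z}^{\bar m}$ and let $\mathbf{R}\in\mathbb{K}[X]^{\bar m\times\bar m}$ be a $\mathbf{d}$-minimal interpolation basis for $(\mathcal{E}\cdot\mathbf{E},\mathbf{J})$. Then the $\mathbf{s}$-Popov interpolation basis for $(\mathbf{E},\mathbf{J})$ is the submatrix of $\mathrm{lm}_{\mathbf{d}}(\mathbf{R})^{-1}\mathbf{R}\,\mathcal{E}$ formed by its rows at indices $\alpha_1+\cdots+\alpha_i$ for $1\le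 i\le m$.
   Context: For $p\in\mathbb{K}[X]$ and $\mathbf{e}\in\mathbb{K}^{1\times\sigma}$, $p\cdot\mathbf{e}=\mathbf{e}\,p(\mathbf{J})$; for a matrix $\mathbf{A}=[a_{ij}]\in\mathbb{K}[X]^{k\times m}$, $\mathbf{A}\cdot\mathbf{E}\in\mathbb{K}^{k\times\sigma}$ has $i$-th row $\sum_j a_{ij}\cdot\mathbf{e}_j$, $\mathbf{e}_j$ the rows of $\mathbf{E}$. An interpolant for $(\mathbf{E},\mathbf{J})$ is a row $\mathbf{p}$ with $\mathbf{p}\cdot\mathbf{E}=0$; an interpolation basis is a square matrix whose rows form a basis of the free module of interpolants. For a shift $\mathbf{s}$ (integer entries, possibly negative), the $\mathbf{s}$-degree of a nonzero row $[p_j]$ is $\max_j(\deg p_j+s_j)$; the $\mathbf{s}$-leading matrix $\mathrm{lm}_{\mathbf{s}}(\mathbf{P})$ of a full-rank $\mathbf{P}$ with row $\mathbf{s}$-degrees $d_i$ has $(i,j)$ entry the coefficient of degree $d_i-s_j$ of $p_{ij}$; $\mathbf{P}$ is $\mathbf{s}$-reduced if $\mathrm{lm}_{\mathbf{s}}(\mathbf{P})$ has full row rank; an $\mathbf{s}$-minimal interpolation basis is an $\mathbf{s}$-reduced interpolation basis. The $\mathbf{s}$-pivot index of a row is the largest $j$ attaining its $\mathbf{s}$-degree, $p_j$ its pivot entry. A nonsingular matrix is in $\mathbf{s}$-Popov form if its $\mathbf{s}$-pivot entries are monic and on the diagonal and in each column the nonpivot entries have degree less than the pivot entry. The $\mathbf{s}$-Popov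 interpolation basis is the unique interpolation basis in $\mathbf{s}$-Popov form; the $\mathbf{s}$-minimal degree is the tuple of degrees of its diagonal entries. *)

theory Defs
  imports "Jordan_Normal_Form.Gauss_Jordan_Elimination" "Jordan_Normal_Form.Determinant" "HOL-Computational_Algebra.Polynomial"
begin

definition poly_mat_eval :: "'a::field poly \<Rightarrow> 'a mat \<Rightarrow> 'a mat" where
  "poly_mat_eval p J = mat (dim_row J) (dim_col J)
     (\<lambda>(k,l). \<Sum>i\<le>degree p. coeff p i * (J ^\<^sub>m i) $$ (k,l))"

definition act :: "'a::field mat \<Rightarrow> 'a poly \<Rightarrow> 'a vec \<Rightarrow> 'a vec" where
  "act J p e = vec (dim_vec e) (\<lambda>l. \<Sum>k<dim_vec e. e $ k * poly_mat_eval p J $$ (k,l))"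

definition row_act :: "'a::field mat \<Rightarrow> 'a poly vec \<Rightarrow> 'a mat \<Rightarrow> 'a vec" where
  "row_act J p E = vec (dim_col E) (\<lambda>l. \<Sum>j<dim_row E. act J (p $ j) (row E j) $ l)"

definition mat_act :: "'a::field mat \<Rightarrow> 'a poly mat \<Rightarrow> 'a mat \<Rightarrow> 'a mat" where
  "mat_act J A E = mat (dim_row A) (dim_col E) (\<lambda>(i,l). row_act J (row A i) E $ l)"

definition interpolant :: "'a::field mat \<Rightarrow> 'a mat \<Rightarrow> 'a poly vec \<Rightarrow> bool" where
  "interpolant E J p \<longleftrightarrow> dim_vec p = dim_row E \<and> row_act J p E = 0\<^sub>v (dim_col E)"

definition interp_basis :: "'a::field mat \<Rightarrow> 'a mat \<Rightarrow> 'a poly mat \<Rightarrow> bool" where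
  "interp_basis E J P \<longleftrightarrow>
     P \<in> carrier_mat (dim_row E) (dim_row E) \<and>
     (\<forall>i<dim_row E. interpolant E J (row P i)) \<and>
     (\<forall>p. interpolant E J p \<longrightarrow>
        (\<exists>v. dim_vec v = dim_row E \<and> p = transpose_mat P *\<^sub>v v)) \<and>
     (\<forall>v. dim_vec v = dim_row E \<longrightarrow> transpose_mat P *\<^sub>v v = 0\<^sub>v (dim_row E)
        \<longrightarrow> v = 0\<^sub>v (dim_row E))"

definition rdeg :: "(nat \<Rightarrow> int) \<Rightarrow> 'a::zero poly vec \<Rightarrow> int" where
  "rdeg s p = Max {int (degree (p $ j)) + s j | j. j < dim_vec p \<and> p $ j \<noteq> 0}"

definition lm :: "(nat \<Rightarrow> int) \<Rightarrow> 'a::zero poly mat \<Rightarrow> 'a mat" where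
  "lm s P = mat (dim_row P) (dim_col P)
     (\<lambda>(i,j). if rdeg s (row P i) - s j < 0 then 0
              else coeff (P $$ (i,j)) (nat (rdeg s (row P i) - s j)))"

definition full_row_rank :: "'a::field mat \<Rightarrow> bool" where
  "full_row_rank M \<longleftrightarrow> (\<forall>v. dim_vec v = dim_row M \<longrightarrow>
      transpose_mat M *\<^sub>v v = 0\<^sub>v (dim_col M) \<longrightarrow> v = 0\<^sub>v (dim_row M))"

definition s_reduced :: "(nat \<Rightarrow> int) \<Rightarrow> 'a::field poly mat \<Rightarrow> bool" where
  "s_reduced s P \<longleftrightarrow> full_row_rank (lm s P)"

definition s_minimal_interp_basis ::
  "'a::field mat \<Rightarrow> 'a mat \<Rightarrow> (nat \<Rightarrow> int) \<Rightarrow> 'a poly mat \<Rightarrow> bool" where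
  "s_minimal_interp_basis E J s P \<longleftrightarrow> interp_basis E J P \<and> s_reduced s P"

definition pivot_index :: "(nat \<Rightarrow> int) \<Rightarrow> 'a::zero poly vec \<Rightarrow> nat" where
  "pivot_index s p = Max {j. j < dim_vec p \<and> p $ j \<noteq> 0 \<and> int (degree (p $ j)) + s j = rdeg s p}"

definition s_popov :: "(nat \<Rightarrow> int) \<Rightarrow> 'a::field poly mat \<Rightarrow> bool" where
  "s_popov s P \<longleftrightarrow> dim_row P = dim_col P \<and> det P \<noteq> 0 \<and>
     (\<forall>i<dim_row P. row P i \<noteq> 0\<^sub>v (dim_col P) \<and> pivot_index s (row P i) = i
         \<and> lead_coeff (P $$ (i,i)) = 1) \<and>
     (\<forall>i<dim_row P. \<forall>j<dim_row P. j \<noteq> i \<longrightarrow>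
         P $$ (j,i) = 0 \<or> degree (P $$ (j,i)) < degree (P $$ (i,i)))"

definition s_popov_interp_basis ::
  "'a::field mat \<Rightarrow> 'a mat \<Rightarrow> (nat \<Rightarrow> int) \<Rightarrow> 'a poly mat \<Rightarrow> bool" where
  "s_popov_interp_basis E J s P \<longleftrightarrow> interp_basis E J P \<and> s_popov s P"

definition s_minimal_degree ::
  "'a::field mat \<Rightarrow> 'a mat \<Rightarrow> (nat \<Rightarrow> int) \<Rightarrow> (nat \<Rightarrow> nat) \<Rightarrow> bool" where
  "s_minimal_degree E J s dlt \<longleftrightarrow> (\<exists>P. s_popov_interp_basis E J s P \<and>
      (\<forall>i<dim_row E. dlt i = degree (P $$ (i,i))))"

(* block structure: index k (0-based) of {0..<alpha_0+...+alpha_(m-1)} lies in block blk k,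
   at position pos k inside the block *)
definition blk :: "(nat \<Rightarrow> nat) \<Rightarrow> nat \<Rightarrow> nat" where
  "blk \<alpha> k = (LEAST i. k < (\<Sum>j<Suc i. \<alpha> j))"

definition pos :: "(nat \<Rightarrow> nat) \<Rightarrow> nat \<Rightarrow> nat" where
  "pos \<alpha> k = k - (\<Sum>j<blk \<alpha> k. \<alpha> j)"

definition Ecal :: "nat \<Rightarrow> (nat \<Rightarrow> nat) \<Rightarrow> nat \<Rightarrow> 'a::field poly mat" where
  "Ecal m \<alpha> d = mat (\<Sum>i<m. \<alpha> i) m
     (\<lambda>(k,j). if j = blk \<alpha> k then monom 1 (pos \<alpha> k * d) else 0)"

definition dbar :: "(nat \<Rightarrow> nat) \<Rightarrow> (nat \<Rightarrow> nat) \<Rightarrow> nat \<Rightarrow> nat \<Rightarrow> nat" where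
  "dbar \<alpha> \<beta> d k = (if pos \<alpha> k = \<alpha> (blk \<alpha> k) - 1 then \<beta> (blk \<alpha> k) else d)"

end

theory Submission
  imports Defs
begin

section \<open>Evaluation of polynomials at matrices\<close>

lemma ev_carrier: "J \<in> carrier_mat n n \<Longrightarrow> poly_mat_eval p J \<in> carrier_mat n n"
  unfolding poly_mat_eval_def by auto

lemma ev_dims[simp]: "dim_row (poly_mat_eval p J) = dim_row J" "dim_col (poly_mat_eval p J) = dim_col J"
  unfolding poly_mat_eval_def by auto

lemma ev_entry_bound:
  assumes J: "J \<in> carrier_mat n n" and k: "k < n" and l: "l < n" and N: "degree p \<le> N"
  shows "poly_mat_eval p J $$ (k,l) = (\<Sum>i\<le>N. coeff p i * (J ^\<^sub>m i) $$ (k,l))"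
proof -
  have "poly_mat_eval p J $$ (k,l) = (\<Sum>i\<le>degree p. coeff p i * (J ^\<^sub>m i) $$ (k,l))"
    using J k l unfolding poly_mat_eval_def by auto
  also have "\<dots> = (\<Sum>i\<le>N. coeff p i * (J ^\<^sub>m i) $$ (k,l))"
    by (rule sum.mono_neutral_left) (use N in \<open>auto simp: coeff_eq_0\<close>)
  finally show ?thesis .
qed

lemma ev_add: assumes J: "J \<in> carrier_mat n n"
  shows "poly_mat_eval (p + q) J = poly_mat_eval p J + poly_mat_eval q J"
proof (rule eq_matI)
  fix k l assume k: "k < dim_row (poly_mat_eval p J + poly_mat_eval q J)"
    and l: "l < dim_col (poly_mat_eval p J + poly_mat_eval q J)"
  let ?N = "max (degree p) (degree q)"
  from k l J have k: "k < n" and l: "l < n" by (auto simp: ev_carrier)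
  have "degree (p+q) \<le> ?N" by (rule degree_add_le) auto
  then have "poly_mat_eval (p + q) J $$ (k, l) = poly_mat_eval p J $$ (k, l) + poly_mat_eval q J $$ (k, l)"
    by (simp add: ev_entry_bound[OF J k l, of _ ?N] algebra_simps sum.distrib)
  then show "poly_mat_eval (p + q) J $$ (k, l) = (poly_mat_eval p J + poly_mat_eval q J) $$ (k, l)"
    using J k l by auto
qed (use J ev_carrier[OF J] in auto)

lemma ev_smult: assumes J: "J \<in> carrier_mat n n"
  shows "poly_mat_eval (smult a p) J = a \<cdot>\<^sub>m poly_mat_eval p J"
proof (rule eq_matI)
  fix k l assume k: "k < dim_row (a \<cdot>\<^sub>m poly_mat_eval p J)"
    and l: "l < dim_col (a \<cdot>\<^sub>m poly_mat_eval p J)"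
  from k l J have k: "k < n" and l: "l < n" by (auto simp: ev_carrier)
  show "poly_mat_eval (smult a p) J $$ (k, l) = (a \<cdot>\<^sub>m poly_mat_eval p J) $$ (k, l)"
    using J k l
    by (simp add: ev_entry_bound[OF J k l, of "smult a p" "degree p"] ev_entry_bound[OF J k l, of p "degree p"]
        sum_distrib_left mult.assoc)
qed (use J ev_carrier[OF J] in auto)

lemma ev_zero: assumes J: "J \<in> carrier_mat n n"
  shows "poly_mat_eval 0 J = 0\<^sub>m n n"
  using J unfolding poly_mat_eval_def by (auto intro!: eq_matI)

lemma ev_pCons: assumes J: "J \<in> carrier_mat n n"
  shows "poly_mat_eval (pCons a p) J = a \<cdot>\<^sub>m 1\<^sub>m n + poly_mat_eval p J * J"
proof (rule eq_matI)
  fix k l assume k: "k < dim_row (a \<cdot>\<^sub>m 1\<^sub>m n + poly_mat_eval p J * J)"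
    and l: "l < dim_col (a \<cdot>\<^sub>m 1\<^sub>m n + poly_mat_eval p J * J)"
  from k l J have k: "k < n" and l: "l < n" by (auto simp: ev_carrier)
  have d: "degree (pCons a p) \<le> Suc (degree p)" by (simp add: degree_pCons_le)
  have "poly_mat_eval (pCons a p) J $$ (k,l) = (\<Sum>i\<le>Suc (degree p). coeff (pCons a p) i * (J ^\<^sub>m i) $$ (k,l))"
    by (rule ev_entry_bound[OF J k l d])
  also have "\<dots> = a * (1\<^sub>m n) $$ (k,l) + (\<Sum>i\<le>degree p. coeff p i * (J ^\<^sub>m Suc i) $$ (k,l))"
    by (subst sum.atMost_Suc_shift) (use k l J in simp)
  also have "(\<Sum>i\<le>degree p. coeff p i * (J ^\<^sub>m Suc i) $$ (k,l))
     = (\<Sum>i\<le>degree p. \<Sum>t<n. coeff p i * ((J ^\<^sub>m i) $$ (k,t) * J $$ (t,l)))"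
    using J k l by (auto intro!: sum.cong simp: scalar_prod_def sum_distrib_left
       pow_carrier_mat[OF J] row_def col_def)
  also have "\<dots> = (\<Sum>t<n. \<Sum>i\<le>degree p. coeff p i * ((J ^\<^sub>m i) $$ (k,t) * J $$ (t,l)))"
    by (rule sum.swap)
  also have "\<dots> = (\<Sum>t<n. poly_mat_eval p J $$ (k,t) * J $$ (t,l))"
    by (rule sum.cong[OF refl]) (simp add: ev_entry_bound[OF J k _ order.refl] sum_distrib_right mult.assoc)
  also have "\<dots> = (poly_mat_eval p J * J) $$ (k,l)"
    using J k l ev_carrier[OF J, of p] by (simp add: scalar_prod_def row_def col_def atLeast0LessThan)
  finally show "poly_mat_eval (pCons a p) J $$ (k, l) = (a \<cdot>\<^sub>m 1\<^sub>m n + poly_mat_eval p J * J) $$ (k, l)"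
    using J k l ev_carrier[OF J, of p] by simp
qed (use J ev_carrier[OF J] in auto)

lemma ev_mult: assumes J: "J \<in> carrier_mat n n"
  shows "poly_mat_eval (p * q) J = poly_mat_eval p J * poly_mat_eval q J"
proof (induction q rule: pCons_induct)
  case 0
  show ?case unfolding mult_zero_right ev_zero[OF J]
    by (rule right_mult_zero_mat[OF ev_carrier[OF J], symmetric])
next
  case (pCons a q)
  let ?A = "poly_mat_eval p J" and ?B = "poly_mat_eval q J"
  have Ep: "?A \<in> carrier_mat n n" and Eq: "?B \<in> carrier_mat n n"
    using ev_carrier[OF J] by auto
    have 1: "?A * (a \<cdot>\<^sub>m 1\<^sub>m n + ?B * J) = ?A * (a \<cdot>\<^sub>m 1\<^sub>m n) + ?A * (?B * J)"
      by (rule mult_add_distrib_mat[OF Ep smult_carrier_mat[OF one_carrier_mat] mult_carrier_mat[OF Eq J]])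
    have 2: "?A * (a \<cdot>\<^sub>m 1\<^sub>m n) = a \<cdot>\<^sub>m (?A * 1\<^sub>m n)"
      by (rule mult_smult_distrib[OF Ep one_carrier_mat])
    have 3: "?A * 1\<^sub>m n = ?A" using Ep by (rule right_mult_one_mat)
    have 4: "?A * (?B * J) = ?A * ?B * J" by (rule assoc_mult_mat[symmetric, OF Ep Eq J])
  have e1: "p * pCons a q = smult a p + pCons 0 (p * q)" by simp
  have z: "0 \<cdot>\<^sub>m 1\<^sub>m n = (0\<^sub>m n n :: 'a mat)" by (rule eq_matI) auto
  have c: "?A * ?B * J \<in> carrier_mat n n" using mult_carrier_mat[OF mult_carrier_mat[OF Ep Eq] J] .
  have "poly_mat_eval (p * pCons a q) J = a \<cdot>\<^sub>m ?A + (0 \<cdot>\<^sub>m 1\<^sub>m n + poly_mat_eval (p*q) J * J)"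
    unfolding e1 ev_add[OF J] ev_smult[OF J] ev_pCons[OF J] by (rule refl)
  also have "\<dots> = a \<cdot>\<^sub>m ?A + ?A * ?B * J"
    unfolding z pCons.IH left_add_zero_mat[OF c] by (rule refl)
  also have "\<dots> = ?A * (a \<cdot>\<^sub>m 1\<^sub>m n + ?B * J)"
    unfolding 1 2 3 4 by (rule refl)
  finally show ?case unfolding ev_pCons[OF J, of a q] .
qed

lemma ev_sum_entry: assumes J: "J \<in> carrier_mat n n" and k: "k < n" and l: "l < n" and I: "finite I"
  shows "poly_mat_eval (\<Sum>i\<in>I. f i) J $$ (k,l) = (\<Sum>i\<in>I. poly_mat_eval (f i) J $$ (k,l))"
  using I
proof (induction I rule: finite_induct)
  case empty
  then show ?case using k l by (simp add: ev_zero[OF J])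
next
  case (insert x F)
  then show ?case using k l carrier_matD[OF J] by (simp add: ev_add[OF J])
qed

lemma ev_mult_entry: assumes J: "J \<in> carrier_mat n n" and k: "k < n" and l: "l < n"
  shows "poly_mat_eval (p * q) J $$ (k,l) = (\<Sum>t<n. poly_mat_eval p J $$ (k,t) * poly_mat_eval q J $$ (t,l))"
  unfolding ev_mult[OF J] using k l J by (simp add: scalar_prod_def row_def col_def atLeast0LessThan)

lemma act_entry: assumes "dim_vec e = n" "l < n"
  shows "act J p e $ l = (\<Sum>k<n. e $ k * poly_mat_eval p J $$ (k,l))"
  using assms unfolding act_def by simp

lemma row_act_entry: assumes "l < dim_col E"
  shows "row_act J q E $ l = (\<Sum>j<dim_row E. \<Sum>k<dim_col E. E $$ (j,k) * poly_mat_eval (q $ j) J $$ (k,l))"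
  using assms unfolding row_act_def act_def by (simp add: row_def)

lemma dim_row_act[simp]: "dim_vec (row_act J q E) = dim_col E"
  unfolding row_act_def by simp

lemma mat_act_carrier: "mat_act J A E \<in> carrier_mat (dim_row A) (dim_col E)"
  unfolding mat_act_def by simp

lemma mat_act_entry: "i < dim_row A \<Longrightarrow> l < dim_col E \<Longrightarrow> mat_act J A E $$ (i,l) = row_act J (row A i) E $ l"
  unfolding mat_act_def by simp

lemma transfer:
  assumes J: "J \<in> carrier_mat n n" and A: "A \<in> carrier_mat K m'" and E: "E \<in> carrier_mat m' n"
    and u: "dim_vec u = K" and q: "dim_vec q = m'"
    and hq: "\<And>j. j < m' \<Longrightarrow> q $ j = (\<Sum>i<K. A $$ (i,j) * u $ i)"
  shows "row_act J q E = row_act J u (mat_act J A E)"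
proof (rule eq_vecI)
  show "dim_vec (row_act J q E) = dim_vec (row_act J u (mat_act J A E))"
    using E by (simp add: mat_act_def)
  fix l assume "l < dim_vec (row_act J u (mat_act J A E))"
  then have l: "l < n" using E by (simp add: mat_act_def)
  define F where "F = (\<lambda>j k i t. E $$ (j,k) * (poly_mat_eval (A $$ (i,j)) J $$ (k,t) * poly_mat_eval (u $ i) J $$ (t,l)))"
  have "row_act J q E $ l = (\<Sum>j<m'. \<Sum>k<n. E $$ (j,k) * poly_mat_eval (q $ j) J $$ (k,l))"
    using E l by (simp add: row_act_entry)
  also have "\<dots> = (\<Sum>j<m'. \<Sum>k<n. \<Sum>i<K. \<Sum>t<n. F j k i t)"
  proof (intro sum.cong refl)
    fix j k assume j: "j \<in> {..<m'}" and k: "k \<in> {..<n}"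
    have "poly_mat_eval (q $ j) J $$ (k,l) = (\<Sum>i<K. poly_mat_eval (A $$ (i,j) * u $ i) J $$ (k,l))"
      using j k l by (simp add: hq ev_sum_entry[OF J])
    also have "\<dots> = (\<Sum>i<K. \<Sum>t<n. poly_mat_eval (A $$ (i,j)) J $$ (k,t) * poly_mat_eval (u $ i) J $$ (t,l))"
      using k l by (simp add: ev_mult_entry[OF J])
    finally show "E $$ (j,k) * poly_mat_eval (q $ j) J $$ (k,l) = (\<Sum>i<K. \<Sum>t<n. F j k i t)"
      unfolding F_def by (simp add: sum_distrib_left)
  qed
  also have "\<dots> = (\<Sum>j<m'. \<Sum>i<K. \<Sum>k<n. \<Sum>t<n. F j k i t)"
    by (rule sum.cong[OF refl], rule sum.swap)
  also have "\<dots> = (\<Sum>i<K. \<Sum>j<m'. \<Sum>k<n. \<Sum>t<n. F j k i t)"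
    by (rule sum.swap)
  also have "\<dots> = (\<Sum>i<K. \<Sum>j<m'. \<Sum>t<n. \<Sum>k<n. F j k i t)"
    by (rule sum.cong[OF refl], rule sum.cong[OF refl], rule sum.swap)
  also have "\<dots> = (\<Sum>i<K. \<Sum>t<n. \<Sum>j<m'. \<Sum>k<n. F j k i t)"
    by (rule sum.cong[OF refl], rule sum.swap)
  also have "\<dots> = row_act J u (mat_act J A E) $ l"
  proof -
    have "row_act J u (mat_act J A E) $ l = (\<Sum>i<K. \<Sum>t<n. mat_act J A E $$ (i,t) * poly_mat_eval (u $ i) J $$ (t,l))"
      using A E l by (simp add: row_act_entry mat_act_def)
    also have "\<dots> = (\<Sum>i<K. \<Sum>t<n. \<Sum>j<m'. \<Sum>k<n. F j k i t)"
    proof (intro sum.cong refl)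
      fix i t assume i: "i \<in> {..<K}" and t: "t \<in> {..<n}"
      have "mat_act J A E $$ (i,t) = (\<Sum>j<m'. \<Sum>k<n. E $$ (j,k) * poly_mat_eval (A $$ (i,j)) J $$ (k,t))"
        using i t A E by (simp add: mat_act_entry row_act_entry)
      then show "mat_act J A E $$ (i,t) * poly_mat_eval (u $ i) J $$ (t,l) = (\<Sum>j<m'. \<Sum>k<n. F j k i t)"
        unfolding F_def by (simp add: sum_distrib_right mult.assoc)
    qed
    finally show ?thesis by (rule sym)
  qed
  finally show "row_act J q E $ l = row_act J u (mat_act J A E) $ l" .
qed

lemma ev_diff_entry: assumes J: "J \<in> carrier_mat n n" and k: "k < n" and l: "l < n"
  shows "poly_mat_eval (a - b) J $$ (k,l) = poly_mat_eval a J $$ (k,l) - poly_mat_eval b J $$ (k,l)"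
proof -
  have "poly_mat_eval a J = poly_mat_eval (a - b) J + poly_mat_eval b J"
    using ev_add[OF J, of "a - b" b] by simp
  then have "poly_mat_eval a J $$ (k,l) = poly_mat_eval (a - b) J $$ (k,l) + poly_mat_eval b J $$ (k,l)"
    using k l carrier_matD[OF J] by simp
  then show ?thesis by simp
qed

lemma row_act_diff: assumes J: "J \<in> carrier_mat n n" and E: "E \<in> carrier_mat m' n"
  and p: "dim_vec p = m'" and q: "dim_vec q = m'"
  shows "row_act J (p - q) E = row_act J p E - row_act J q E"
proof (rule eq_vecI)
  fix l assume "l < dim_vec (row_act J p E - row_act J q E)"
  then have l: "l < n" using E by simp
  show "row_act J (p - q) E $ l = (row_act J p E - row_act J q E) $ l"
    using E l p q by (simp add: row_act_entry ev_diff_entry[OF J] algebra_simps sum_subtractf)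
qed (use E in simp)

lemma row_act_zero_rows:
  assumes "\<And>i. i < dim_row A \<Longrightarrow> row_act J (row A i) E = 0\<^sub>v (dim_col E)"
  shows "row_act J u (mat_act J A E) = 0\<^sub>v (dim_col E)"
proof (rule eq_vecI)
  fix l assume "l < dim_vec (0\<^sub>v (dim_col E) :: 'a vec)"
  then have l: "l < dim_col E" by simp
  have "\<And>i t. i < dim_row A \<Longrightarrow> t < dim_col E \<Longrightarrow> mat_act J A E $$ (i,t) = 0"
    using assms by (simp add: mat_act_entry)
  then show "row_act J u (mat_act J A E) $ l = 0\<^sub>v (dim_col E) $ l"
    using l by (simp add: row_act_entry mat_act_def)
qed (simp add: mat_act_def)

lemma tmv_entry: assumes "B \<in> carrier_mat K K'" "j < K'" "dim_vec u = K"
  shows "(transpose_mat B *\<^sub>v u) $ j = (\<Sum>i<K. B $$ (i,j) * u $ i)"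
  using assms by (simp add: scalar_prod_def atLeast0LessThan)

lemma coeff_mult_bound: fixes p q :: "'a::idom poly"
  assumes "degree p \<le> a" "degree q \<le> b"
  shows "coeff (p * q) (a + b) = coeff p a * coeff q b"
proof (cases "degree p = a \<and> degree q = b")
  case True
  then show ?thesis using coeff_mult_degree_sum[of p q] by simp
next
  case False
  then have lt: "degree p < a \<or> degree q < b" using assms by auto
  then have "degree (p * q) < a + b" using degree_mult_le[of p q] assms by linarith
  then have "coeff (p*q) (a+b) = 0" by (rule coeff_eq_0)
  moreover have "coeff p a * coeff q b = 0" using lt by (auto simp: coeff_eq_0)
  ultimately show ?thesis by simp
qed

lemma lead:
  fixes B :: "'a::field poly mat" and u :: "'a poly vec" and r w :: "nat \<Rightarrow> nat"
  assumes B: "B \<in> carrier_mat K K'" and u: "dim_vec u = K" and u0: "u \<noteq> 0\<^sub>v K"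
    and deg: "\<And>i j. i<K \<Longrightarrow> j<K' \<Longrightarrow> degree (B$$(i,j)) \<le> r i + w j"
    and frr: "\<And>c. dim_vec c = K \<Longrightarrow> (\<And>j. j<K' \<Longrightarrow> (\<Sum>i<K. c$i * coeff (B$$(i,j)) (r i + w j)) = 0) \<Longrightarrow> c = 0\<^sub>v K"
  shows "\<exists>t. (\<forall>i<K. u$i \<noteq> 0 \<longrightarrow> degree (u$i) + r i \<le> t) \<and>
     (\<forall>j<K'. degree ((transpose_mat B *\<^sub>v u)$j) \<le> t + w j) \<and>
     (\<forall>j<K'. coeff ((transpose_mat B *\<^sub>v u)$j) (t + w j) =
        (\<Sum>i<K. (if r i \<le> t then coeff (u$i) (t - r i) else 0) * coeff (B$$(i,j)) (r i + w j))) \<and>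
     (\<exists>j<K'. coeff ((transpose_mat B *\<^sub>v u)$j) (t + w j) \<noteq> 0)"
proof -
  define T where "T = {degree (u$i) + r i | i. i<K \<and> u$i \<noteq> 0}"
  have "\<exists>i<K. u$i \<noteq> 0"
  proof (rule ccontr)
    assume "\<not> ?thesis"
    then have "u = 0\<^sub>v K" using u by (auto intro!: eq_vecI)
    with u0 show False by simp
  qed
  then obtain i1 where i1: "i1 < K" "u$i1 \<noteq> 0" by blast
  have fin: "finite T" unfolding T_def by simp
  have ne: "T \<noteq> {}" unfolding T_def using i1 by blast
  define t where "t = Max T"
  have tge: "\<forall>i<K. u$i \<noteq> 0 \<longrightarrow> degree (u$i) + r i \<le> t"
    unfolding t_def using fin by (auto intro!: Max_ge simp: T_def)
  have "t \<in> T" unfolding t_def using fin ne by (rule Max_in)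
  then obtain i0 where i0: "i0 < K" "u$i0 \<noteq> 0" "degree (u$i0) + r i0 = t" unfolding T_def by blast
  have entry: "\<And>j. j < K' \<Longrightarrow> (transpose_mat B *\<^sub>v u)$j = (\<Sum>i<K. B $$ (i,j) * u $ i)"
    using tmv_entry[OF B _ u] by blast
  have termdeg: "\<And>i j n. i < K \<Longrightarrow> j < K' \<Longrightarrow> n > t + w j \<Longrightarrow> coeff (B $$ (i,j) * u $ i) n = 0"
  proof -
    fix i j n assume i: "i < K" and j: "j < K'" and n: "n > t + w j"
    show "coeff (B $$ (i,j) * u $ i) n = 0"
    proof (cases "u$i = 0")
      case True then show ?thesis by simp
    next
      case False
      have "degree (B $$ (i,j) * u $ i) \<le> degree (B $$ (i,j)) + degree (u $ i)" by (rule degree_mult_le)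
      also have "\<dots> \<le> t + w j"
      proof -
        have "degree (u$i) + r i \<le> t" using tge i False by blast
        then show ?thesis using deg[OF i j] by linarith
      qed
      finally show ?thesis using n by (intro coeff_eq_0) linarith
    qed
  qed
  have D: "\<forall>j<K'. degree ((transpose_mat B *\<^sub>v u)$j) \<le> t + w j"
  proof (intro allI impI)
    fix j assume j: "j < K'"
    have "\<forall>n>t + w j. coeff ((transpose_mat B *\<^sub>v u)$j) n = 0"
      using termdeg j by (simp add: entry[OF j] coeff_sum)
    then show "degree ((transpose_mat B *\<^sub>v u)$j) \<le> t + w j" by (rule degree_le)
  qed
  define c where "c = vec K (\<lambda>i. if r i \<le> t then coeff (u$i) (t - r i) else 0)"
  have C: "\<forall>j<K'. coeff ((transpose_mat B *\<^sub>v u)$j) (t + w j) =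
        (\<Sum>i<K. (if r i \<le> t then coeff (u$i) (t - r i) else 0) * coeff (B$$(i,j)) (r i + w j))"
  proof (intro allI impI)
    fix j assume j: "j < K'"
    have "coeff ((transpose_mat B *\<^sub>v u)$j) (t + w j) = (\<Sum>i<K. coeff (B $$ (i,j) * u $ i) (t + w j))"
      by (simp add: entry[OF j] coeff_sum)
    also have "\<dots> = (\<Sum>i<K. (if r i \<le> t then coeff (u$i) (t - r i) else 0) * coeff (B$$(i,j)) (r i + w j))"
    proof (rule sum.cong[OF refl])
      fix i assume "i \<in> {..<K}"
      then have i: "i < K" by simp
      show "coeff (B $$ (i,j) * u $ i) (t + w j) = (if r i \<le> t then coeff (u$i) (t - r i) else 0) * coeff (B$$(i,j)) (r i + w j)"
      proof (cases "u$i = 0")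
        case True then show ?thesis by simp
      next
        case False
        have rt: "r i \<le> t" and du: "degree (u$i) \<le> t - r i" using tge i False by auto
        have "t + w j = (r i + w j) + (t - r i)" using rt by simp
        then have "coeff (B $$ (i,j) * u $ i) (t + w j) = coeff (B $$ (i,j)) (r i + w j) * coeff (u $ i) (t - r i)"
          using coeff_mult_bound[OF deg[OF i j] du] by (simp only:)
        then show ?thesis using rt by simp
      qed
    qed
    finally show "coeff ((transpose_mat B *\<^sub>v u)$j) (t + w j) =
        (\<Sum>i<K. (if r i \<le> t then coeff (u$i) (t - r i) else 0) * coeff (B$$(i,j)) (r i + w j))" .
  qed
  have "c \<noteq> 0\<^sub>v K"
  proof
    assume "c = 0\<^sub>v K"
    then have "c $ i0 = 0" using i0 by simp
    moreover have "c $ i0 = lead_coeff (u $ i0)" using i0 unfolding c_def by auto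
    ultimately show False using i0 by simp
  qed
  then obtain j where j: "j < K'" "(\<Sum>i<K. c$i * coeff (B$$(i,j)) (r i + w j)) \<noteq> 0"
    using frr[of c] unfolding c_def by auto
  then have "coeff ((transpose_mat B *\<^sub>v u)$j) (t + w j) \<noteq> 0"
    using C unfolding c_def by simp
  then show ?thesis using tge D C j by blast
qed

section \<open>Block indexing\<close>

definition st :: "(nat \<Rightarrow> nat) \<Rightarrow> nat \<Rightarrow> nat" where "st \<alpha> i = (\<Sum>j<i. \<alpha> j)"

lemma st_Suc: "st \<alpha> (Suc i) = st \<alpha> i + \<alpha> i" unfolding st_def by simp

lemma st_mono: "i \<le> j \<Longrightarrow> st \<alpha> i \<le> st \<alpha> j"
  unfolding st_def by (rule sum_mono2) auto

lemma blk_st: "blk \<alpha> k = (LEAST i. k < st \<alpha> (Suc i))"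
  unfolding blk_def st_def ..

lemma blk_eq: assumes p: "p < \<alpha> i" shows "blk \<alpha> (st \<alpha> i + p) = i" "pos \<alpha> (st \<alpha> i + p) = p"
proof -
  show b: "blk \<alpha> (st \<alpha> i + p) = i"
    unfolding blk_st
  proof (rule Least_equality)
    show "st \<alpha> i + p < st \<alpha> (Suc i)" using p by (simp add: st_Suc)
    fix i' assume "st \<alpha> i + p < st \<alpha> (Suc i')"
    then show "i \<le> i'" using st_mono[of "Suc i'" i \<alpha>] by (cases "Suc i' \<le> i") auto
  qed
  show "pos \<alpha> (st \<alpha> i + p) = p" unfolding pos_def b st_def[symmetric] by simp
qed

lemma blk_props: assumes k: "k < st \<alpha> m"
  shows "blk \<alpha> k < m" "st \<alpha> (blk \<alpha> k) \<le> k" "k < st \<alpha> (Suc (blk \<alpha> k))"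
    "k = st \<alpha> (blk \<alpha> k) + pos \<alpha> k" "pos \<alpha> k < \<alpha> (blk \<alpha> k)"
proof -
  have m: "m > 0" using k by (cases m) (auto simp: st_def)
  have ex: "k < st \<alpha> (Suc (m - 1))" using k m by simp
  show lt: "k < st \<alpha> (Suc (blk \<alpha> k))" unfolding blk_st by (rule LeastI[of "\<lambda>i. k < st \<alpha> (Suc i)", OF ex])
  have "blk \<alpha> k \<le> m - 1" unfolding blk_st by (rule Least_le[of "\<lambda>i. k < st \<alpha> (Suc i)", OF ex])
  then show "blk \<alpha> k < m" using m by linarith
  show ge: "st \<alpha> (blk \<alpha> k) \<le> k"
  proof (cases "blk \<alpha> k")
    case 0 then show ?thesis by (simp add: st_def)
  next
    case (Suc b)
    then have "\<not> k < st \<alpha> (Suc b)" using not_less_Least[of b "\<lambda>i. k < st \<alpha> (Suc i)"]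
      unfolding blk_st by auto
    then show ?thesis using Suc by simp
  qed
  show "k = st \<alpha> (blk \<alpha> k) + pos \<alpha> k" using ge unfolding pos_def st_def[symmetric] by simp
  then show "pos \<alpha> k < \<alpha> (blk \<alpha> k)" using lt by (simp add: st_Suc)
qed

lemma blk_inj: assumes "k < st \<alpha> m" "k' < st \<alpha> m" "blk \<alpha> k = blk \<alpha> k'" "pos \<alpha> k = pos \<alpha> k'"
  shows "k = k'"
  using blk_props(4)[OF assms(1)] blk_props(4)[OF assms(2)] assms(3,4) by simp

lemma st_lt: assumes "i < m" "p < \<alpha> i" shows "st \<alpha> i + p < st \<alpha> m"
proof -
  have "st \<alpha> i + p < st \<alpha> (Suc i)" using assms by (simp add: st_Suc)
  also have "\<dots> \<le> st \<alpha> m" using assms by (intro st_mono) simp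
  finally show ?thesis .
qed

locale lin_setup =
  fixes E J :: "'a::field mat" and s :: "nat \<Rightarrow> int" and dlt \<alpha> \<beta> :: "nat \<Rightarrow> nat" and m \<sigma> d :: nat
    and R P :: "'a poly mat"
  assumes E: "E \<in> carrier_mat m \<sigma>" and J: "J \<in> carrier_mat \<sigma> \<sigma>"
    and d_pos: "d \<ge> 1"
    and decomp: "\<forall>i<m. 1 \<le> \<alpha> i \<and> \<beta> i < d \<and> dlt i = (\<alpha> i - 1) * d + \<beta> i"
    and R: "s_minimal_interp_basis (mat_act J (Ecal m \<alpha> d) E) J (\<lambda>k. - int (dbar \<alpha> \<beta> d k)) R"
    and P: "s_popov_interp_basis E J s P"
    and Pdeg: "\<forall>i<m. dlt i = degree (P $$ (i,i))"
begin

lemma Pc: "P \<in> carrier_mat m m"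
  using P E unfolding s_popov_interp_basis_def interp_basis_def by auto

lemma P_int: "i < m \<Longrightarrow> interpolant E J (row P i)"
  using P E unfolding s_popov_interp_basis_def interp_basis_def by auto

lemma P_span: "interpolant E J p \<Longrightarrow> \<exists>v. dim_vec v = m \<and> p = transpose_mat P *\<^sub>v v"
  using P E unfolding s_popov_interp_basis_def interp_basis_def by auto

lemma P_coeff: assumes i: "i < m" and j: "j < m"
  shows "degree (P $$ (i,j)) \<le> dlt j" "coeff (P $$ (i,j)) (dlt j) = (if i = j then 1 else 0)"
proof -
  have pop: "s_popov s P" using P unfolding s_popov_interp_basis_def by auto
  have dr: "dim_row P = m" using Pc by simp
  have lc: "lead_coeff (P $$ (j,j)) = 1" using pop j dr unfolding s_popov_def by auto
  have col: "i \<noteq> j \<Longrightarrow> P $$ (i,j) = 0 \<or> degree (P $$ (i,j)) < degree (P $$ (j,j))"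
    using pop i j dr unfolding s_popov_def by auto
  have dj: "dlt j = degree (P $$ (j,j))" using Pdeg j by auto
  show "degree (P $$ (i,j)) \<le> dlt j"
    using col dj by (cases "i = j") auto
  show "coeff (P $$ (i,j)) (dlt j) = (if i = j then 1 else 0)"
  proof (cases "i = j")
    case True then show ?thesis using lc dj by simp
  next
    case False then show ?thesis using col dj by (auto simp: coeff_eq_0)
  qed
qed

lemma M_lower: assumes p: "interpolant E J p"
  and z: "\<And>j n. j < m \<Longrightarrow> n \<ge> dlt j \<Longrightarrow> coeff (p $ j) n = 0"
  shows "p = 0\<^sub>v m"
proof -
  obtain v where v: "dim_vec v = m" "p = transpose_mat P *\<^sub>v v" using P_span[OF p] by blast
  show ?thesis
  proof (cases "v = 0\<^sub>v m")
    case True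
    show ?thesis unfolding v(2) True using Pc by (intro eq_vecI) (auto simp: tmv_entry)
  next
    case False
    have "\<exists>t. (\<forall>i<m. v$i \<noteq> 0 \<longrightarrow> degree (v$i) + 0 \<le> t) \<and>
     (\<forall>j<m. degree ((transpose_mat P *\<^sub>v v)$j) \<le> t + dlt j) \<and>
     (\<forall>j<m. coeff ((transpose_mat P *\<^sub>v v)$j) (t + dlt j) =
        (\<Sum>i<m. (if 0 \<le> t then coeff (v$i) (t - 0) else 0) * coeff (P$$(i,j)) (0 + dlt j))) \<and>
     (\<exists>j<m. coeff ((transpose_mat P *\<^sub>v v)$j) (t + dlt j) \<noteq> 0)"
    proof (rule lead[OF Pc v(1) False, of "\<lambda>_. 0" dlt])
      fix i j assume "i < m" "j < m" then show "degree (P $$ (i, j)) \<le> 0 + dlt j" using P_coeff by simp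
    next
      fix c :: "'a vec" assume c: "dim_vec c = m"
        and h: "\<And>j. j < m \<Longrightarrow> (\<Sum>i<m. c $ i * coeff (P $$ (i, j)) (0 + dlt j)) = 0"
      show "c = 0\<^sub>v m"
      proof (rule eq_vecI)
        fix j assume "j < dim_vec (0\<^sub>v m :: 'a vec)"
        then have j: "j < m" by simp
        have "(\<Sum>i<m. c $ i * coeff (P $$ (i, j)) (0 + dlt j)) = (\<Sum>i<m. if i = j then c $ j else 0)"
          using j by (intro sum.cong refl) (auto simp: P_coeff)
        also have "\<dots> = c $ j" using j by simp
        finally show "c $ j = 0\<^sub>v m $ j" using h[OF j] j by simp
      qed (use c in simp)
    qed
    then obtain t j where "j < m" "coeff (p $ j) (t + dlt j) \<noteq> 0" unfolding v(2) by blast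
    with z show ?thesis by simp
  qed
qed


abbreviation "N \<equiv> st \<alpha> m"
abbreviation "Ec \<equiv> Ecal m \<alpha> d :: 'a poly mat"
abbreviation "Eb \<equiv> mat_act J Ec E"
abbreviation "w \<equiv> dbar \<alpha> \<beta> d"

definition ecal_t :: "'a poly vec \<Rightarrow> 'a poly vec" where
  "ecal_t q = vec m (\<lambda>j. \<Sum>k<N. Ec $$ (k,j) * q $ k)"

lemma Ec_carrier: "Ec \<in> carrier_mat N m"
  unfolding Ecal_def st_def by simp

lemma Ec_entry: "k < N \<Longrightarrow> j < m \<Longrightarrow> Ec $$ (k,j) = (if j = blk \<alpha> k then monom 1 (pos \<alpha> k * d) else 0)"
  unfolding Ecal_def st_def by simp

lemma Eb_carrier: "Eb \<in> carrier_mat N \<sigma>"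
  using mat_act_carrier[of J Ec E] Ec_carrier E by simp

lemma coeff_Ec: assumes "k < N" "j < m"
  shows "coeff (Ec $$ (k,j) * x) n = (if j = blk \<alpha> k \<and> pos \<alpha> k * d \<le> n then coeff x (n - pos \<alpha> k * d) else 0)"
  using assms by (simp add: Ec_entry coeff_monom_mult)

lemma Mbar_iff: assumes q: "dim_vec q = N"
  shows "interpolant Eb J q \<longleftrightarrow> interpolant E J (ecal_t q)"
proof -
  have "row_act J (ecal_t q) E = row_act J q Eb"
    by (rule transfer[OF J Ec_carrier E q]) (auto simp: ecal_t_def)
  then show ?thesis unfolding interpolant_def using q E Eb_carrier by (simp add: ecal_t_def)
qed

lemma decomp_i: "i < m \<Longrightarrow> 1 \<le> \<alpha> i \<and> \<beta> i < d \<and> dlt i = (\<alpha> i - 1) * d + \<beta> i"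
  using decomp by blast

lemma w_le_d: assumes "k < N" shows "w k \<le> d"
  using decomp_i[OF blk_props(1)[OF assms]] unfolding dbar_def by auto

lemma w_last: assumes "k < N" "pos \<alpha> k = \<alpha> (blk \<alpha> k) - 1"
  shows "w k = \<beta> (blk \<alpha> k)" "pos \<alpha> k * d + w k = dlt (blk \<alpha> k)"
  using assms decomp_i[OF blk_props(1)[OF assms(1)]] unfolding dbar_def by auto

lemma w_nonlast: assumes "k < N" "pos \<alpha> k \<noteq> \<alpha> (blk \<alpha> k) - 1"
  shows "w k = d" "pos \<alpha> k * d + w k \<le> (\<alpha> (blk \<alpha> k) - 1) * d"
proof -
  show "w k = d" using assms unfolding dbar_def by auto
  have "Suc (pos \<alpha> k) \<le> \<alpha> (blk \<alpha> k) - 1" using assms blk_props(5)[OF assms(1)] by linarith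
  then have "Suc (pos \<alpha> k) * d \<le> (\<alpha> (blk \<alpha> k) - 1) * d" by (rule mult_le_mono1)
  then show "pos \<alpha> k * d + w k \<le> (\<alpha> (blk \<alpha> k) - 1) * d" using \<open>w k = d\<close> by simp
qed

lemma w_bound: assumes k: "k < N" and n: "dlt (blk \<alpha> k) \<le> n"
  shows "pos \<alpha> k * d + w k \<le> n"
proof (cases "pos \<alpha> k = \<alpha> (blk \<alpha> k) - 1")
  case True then show ?thesis using w_last[OF k] n by simp
next
  case False
  have "dlt (blk \<alpha> k) = (\<alpha> (blk \<alpha> k) - 1) * d + \<beta> (blk \<alpha> k)"
    using decomp_i[OF blk_props(1)[OF k]] by simp
  then show ?thesis using w_nonlast[OF k False] n by linarith
qed

lemma sum_single: assumes "finite A" "a \<in> A" "\<And>x. x \<in> A \<Longrightarrow> x \<noteq> a \<Longrightarrow> f x = 0"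
  shows "sum f A = f a"
proof -
  have "sum f A = sum f {a}"
    by (rule sum.mono_neutral_right) (use assms in auto)
  then show ?thesis by simp
qed

lemma Mbar_lower: assumes q: "interpolant Eb J q"
  and z: "\<And>k n. k < N \<Longrightarrow> n \<ge> w k \<Longrightarrow> coeff (q $ k) n = 0"
  shows "q = 0\<^sub>v N"
proof -
  have dq: "dim_vec q = N" using q Eb_carrier unfolding interpolant_def by simp
  have p: "interpolant E J (ecal_t q)" using Mbar_iff[OF dq] q by simp
  have coeffp: "\<And>j n. j < m \<Longrightarrow> coeff (ecal_t q $ j) n =
      (\<Sum>k<N. if j = blk \<alpha> k \<and> pos \<alpha> k * d \<le> n then coeff (q $ k) (n - pos \<alpha> k * d) else 0)"
    by (simp add: ecal_t_def coeff_sum coeff_Ec)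
  have p0: "ecal_t q = 0\<^sub>v m"
  proof (rule M_lower[OF p])
    fix j n assume j: "j < m" and n: "dlt j \<le> n"
    show "coeff (ecal_t q $ j) n = 0" unfolding coeffp[OF j]
    proof (intro sum.neutral ballI)
      fix k assume "k \<in> {..<N}"
      then have k: "k < N" by simp
      show "(if j = blk \<alpha> k \<and> pos \<alpha> k * d \<le> n then coeff (q $ k) (n - pos \<alpha> k * d) else 0) = 0"
      proof (cases "j = blk \<alpha> k")
        case True
        then have "pos \<alpha> k * d + w k \<le> n" using w_bound[OF k] n by simp
        then show ?thesis using z[OF k] by auto
      qed simp
    qed
  qed
  show ?thesis
  proof (rule eq_vecI)
    fix k assume "k < dim_vec (0\<^sub>v N :: 'a poly vec)"
    then have k: "k < N" by simp
    define j where "j = blk \<alpha> k"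
    have j: "j < m" unfolding j_def by (rule blk_props(1)[OF k])
    have "coeff (q $ k) r = 0" for r
    proof (cases "r < w k")
      case False then show ?thesis using z[OF k] by simp
    next
      case True
      then have rd: "r < d" using w_le_d[OF k] by simp
      define n where "n = pos \<alpha> k * d + r"
      have "coeff (ecal_t q $ j) n = 0" using p0 j by simp
      moreover have "coeff (ecal_t q $ j) n = coeff (q $ k) r"
        unfolding coeffp[OF j]
      proof (subst sum_single[of _ k])
        fix k' assume k': "k' \<in> {..<N}" and ne: "k' \<noteq> k"
        then have k'N: "k' < N" by simp
        show "(if j = blk \<alpha> k' \<and> pos \<alpha> k' * d \<le> n then coeff (q $ k') (n - pos \<alpha> k' * d) else 0) = 0"
        proof (cases "j = blk \<alpha> k' \<and> pos \<alpha> k' * d \<le> n")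
          case True
          then have bk: "blk \<alpha> k' = blk \<alpha> k" and le: "pos \<alpha> k' * d \<le> n" unfolding j_def by auto
          have pne: "pos \<alpha> k' \<noteq> pos \<alpha> k" using blk_inj[OF k'N k bk] ne by auto
          show ?thesis
          proof (cases "pos \<alpha> k' < pos \<alpha> k")
            case True
            then obtain e where e: "pos \<alpha> k = pos \<alpha> k' + Suc e" using less_imp_add_positive by (metis Suc_pred add_gr_0 less_numeral_extra(3))
            have "n - pos \<alpha> k' * d = Suc e * d + r" unfolding n_def e by (simp add: algebra_simps)
            then have "n - pos \<alpha> k' * d \<ge> w k'" using w_le_d[OF k'N] by (simp add: trans_le_add1)
            then show ?thesis using z[OF k'N] by simp
          next
            case False
            then have "Suc (pos \<alpha> k) \<le> pos \<alpha> k'" using pne by simp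
            then have "Suc (pos \<alpha> k) * d \<le> pos \<alpha> k' * d" by (rule mult_le_mono1)
            then have False using le rd unfolding n_def by simp
            then show ?thesis ..
          qed
        next
          case False then show ?thesis by (rule if_not_P)
        qed
      qed (use k j_def n_def in auto)
      ultimately show ?thesis by simp
    qed
    then show "q $ k = 0\<^sub>v N $ k" using k by (simp add: poly_eq_iff)
  qed (use dq in simp)
qed


definition ki :: "nat \<Rightarrow> nat" where "ki i = st \<alpha> i + (\<alpha> i - 1)"

lemma ki_props: assumes i: "i < m"
  shows "ki i < N" "blk \<alpha> (ki i) = i" "pos \<alpha> (ki i) = \<alpha> i - 1" "(\<Sum>k\<le>i. \<alpha> k) - 1 = ki i"
proof -
  have a: "\<alpha> i - 1 < \<alpha> i" using decomp_i[OF i] by simp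
  show "ki i < N" unfolding ki_def by (rule st_lt[of i m "\<alpha> i - 1" \<alpha>, OF i a])
  show "blk \<alpha> (ki i) = i" "pos \<alpha> (ki i) = \<alpha> i - 1" unfolding ki_def using blk_eq[of "\<alpha> i - 1" \<alpha> i, OF a] by auto
  have "(\<Sum>k\<le>i. \<alpha> k) = st \<alpha> (Suc i)" unfolding st_def lessThan_Suc_atMost ..
  then show "(\<Sum>k\<le>i. \<alpha> k) - 1 = ki i" unfolding ki_def st_Suc using decomp_i[OF i] by simp
qed

lemma ki_iff: assumes k: "k < N" and i: "i < m"
  shows "k = ki i \<longleftrightarrow> blk \<alpha> k = i \<and> pos \<alpha> k = \<alpha> (blk \<alpha> k) - 1"
  using ki_props[OF i] blk_inj[OF k ki_props(1)[OF i]] by auto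

lemma interpolant_zero: "interpolant E J (0\<^sub>v m)"
  unfolding interpolant_def
proof
  show "dim_vec (0\<^sub>v m :: 'a poly vec) = dim_row E" using E by simp
  show "row_act J (0\<^sub>v m) E = 0\<^sub>v (dim_col E)"
    by (rule eq_vecI) (use E J in \<open>auto simp: row_act_entry ev_zero[OF J]\<close>)
qed

lemma ecal_t_add: assumes "dim_vec a = N" "dim_vec b = N"
  shows "ecal_t (a + b) = ecal_t a + ecal_t b"
  using assms unfolding ecal_t_def by (intro eq_vecI) (auto simp: algebra_simps sum.distrib)

definition lin :: "nat \<Rightarrow> 'a poly vec" where
  "lin i = vec N (\<lambda>k'. if pos \<alpha> k' = \<alpha> (blk \<alpha> k') - 1 then poly_shift (pos \<alpha> k' * d) (P $$ (i, blk \<alpha> k'))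
       else poly_cutoff d (poly_shift (pos \<alpha> k' * d) (P $$ (i, blk \<alpha> k'))))"

lemma lin_ecal: assumes i: "i < m" shows "ecal_t (lin i) = row P i"
proof (rule eq_vecI)
  fix j assume "j < dim_vec (row P i)"
  then have j: "j < m" using Pc by simp
  define a where "a = \<alpha> j"
  have a1: "1 \<le> a" using decomp_i[OF j] unfolding a_def by simp
  have d0: "0 < d" using d_pos by simp
  have "coeff (ecal_t (lin i) $ j) n = coeff (P $$ (i,j)) n" for n
  proof -
    define ps where "ps = min (n div d) (a - 1)"
    have psa: "ps < a" using a1 unfolding ps_def by linarith
    define ks where "ks = st \<alpha> j + ps"
    have ksN: "ks < N" unfolding ks_def by (rule st_lt[OF j]) (use psa a_def in simp)
    have bks: "blk \<alpha> ks = j" and pks: "pos \<alpha> ks = ps" unfolding ks_def using blk_eq[of ps \<alpha> j] psa a_def by auto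
    have psd: "ps * d \<le> n"
    proof -
      have "ps \<le> n div d" unfolding ps_def by simp
      then show ?thesis using less_eq_div_iff_mult_less_eq[OF d0] by simp
    qed
    have "coeff (ecal_t (lin i) $ j) n = (\<Sum>k<N. coeff (Ec $$ (k,j) * lin i $ k) n)"
      using j by (simp add: ecal_t_def coeff_sum)
    also have "\<dots> = coeff (Ec $$ (ks,j) * lin i $ ks) n"
    proof (rule sum_single)
      fix k' assume k': "k' \<in> {..<N}" and ne: "k' \<noteq> ks"
      then have k'N: "k' < N" by simp
      show "coeff (Ec $$ (k', j) * lin i $ k') n = 0"
      proof (cases "j = blk \<alpha> k' \<and> pos \<alpha> k' * d \<le> n")
        case False then show ?thesis by (subst coeff_Ec[OF k'N j]) (rule if_not_P[OF False])
      next
        case True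
        then have bk: "blk \<alpha> k' = j" and le: "pos \<alpha> k' * d \<le> n" by auto
        have pne: "pos \<alpha> k' \<noteq> ps" using blk_inj[OF k'N ksN] bk bks pks ne by auto
        have ple: "pos \<alpha> k' \<le> n div d" using le less_eq_div_iff_mult_less_eq[OF d0] by simp
        show ?thesis
        proof (cases "pos \<alpha> k' = a - 1")
          case True
          then have "ps = n div d" "n div d < a - 1" using pne unfolding ps_def by auto
          then show ?thesis using ple True by simp
        next
          case False
          have "pos \<alpha> k' < a" using blk_props(5)[OF k'N] bk a_def by simp
          then have pa: "pos \<alpha> k' < a - 1" using False by simp
          have "coeff (Ec $$ (k', j) * lin i $ k') n = coeff (lin i $ k') (n - pos \<alpha> k' * d)"
            by (subst coeff_Ec[OF k'N j]) (rule if_P[OF True])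
          also have "\<dots> = (if n - pos \<alpha> k' * d < d then coeff (P $$ (i,j)) (n - pos \<alpha> k' * d + pos \<alpha> k' * d) else 0)"
            using k'N bk False a_def by (simp add: lin_def coeff_poly_cutoff coeff_poly_shift)
          also have "\<dots> = 0"
          proof (rule ccontr)
            assume "\<not> ?thesis"
            then have "n - pos \<alpha> k' * d < d" by (auto split: if_splits)
            then have "n < Suc (pos \<alpha> k') * d" using le by simp
            then have "n div d < Suc (pos \<alpha> k')" using div_less_iff_less_mult[OF d0] by simp
            then have "n div d = pos \<alpha> k'" using ple by simp
            then have "ps = pos \<alpha> k'" unfolding ps_def using pa by simp
            then show False using pne by simp
          qed
          finally show ?thesis .
        qed
      qed
    qed (use ksN in auto)
    also have "\<dots> = coeff (lin i $ ks) (n - ps * d)"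
      using psd bks pks by (simp add: coeff_Ec[OF ksN j])
    also have "\<dots> = coeff (P $$ (i,j)) n"
    proof (cases "ps = a - 1")
      case True
      then show ?thesis using ksN bks pks psd a_def by (simp add: lin_def coeff_poly_shift)
    next
      case False
      then have ps: "ps = n div d" unfolding ps_def by auto
      have "n - ps * d = n mod d" unfolding ps by (simp add: minus_div_mult_eq_mod)
      moreover have "n mod d < d" using d0 by simp
      moreover have "n mod d + ps * d = n" unfolding ps by simp
      ultimately show ?thesis using ksN bks pks psd a_def False
        by (simp add: lin_def coeff_poly_shift coeff_poly_cutoff)
    qed
    finally show ?thesis .
  qed
  then have "ecal_t (lin i) $ j = P $$ (i,j)" by (simp add: poly_eq_iff)
  then show "ecal_t (lin i) $ j = row P i $ j" using j Pc by (simp add: row_def)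
qed (use Pc in \<open>simp add: ecal_t_def\<close>)

lemma lin_int: assumes i: "i < m" shows "interpolant Eb J (lin i)"
  using Mbar_iff[of "lin i"] lin_ecal[OF i] P_int[OF i] by (simp add: lin_def)

lemma lin_coeff: assumes i: "i < m" and k: "k < N"
  shows "degree (lin i $ k) \<le> w k" "coeff (lin i $ k) (w k) = (if k = ki i then 1 else 0)"
proof -
  define j where "j = blk \<alpha> k"
  have j: "j < m" unfolding j_def by (rule blk_props(1)[OF k])
  have PD: "degree (P $$ (i,j)) \<le> dlt j" "coeff (P $$ (i,j)) (dlt j) = (if i = j then 1 else 0)"
    using P_coeff[OF i j] by auto
  have "degree (lin i $ k) \<le> w k \<and> coeff (lin i $ k) (w k) = (if k = ki i then 1 else 0)"
  proof (cases "pos \<alpha> k = \<alpha> j - 1")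
    case True
    have wl: "w k = \<beta> j" "pos \<alpha> k * d + w k = dlt j" using w_last[OF k] True j_def by auto
    have c: "coeff (lin i $ k) n = coeff (P $$ (i,j)) (n + pos \<alpha> k * d)" for n
      using k True j_def by (simp add: lin_def coeff_poly_shift)
    have "degree (lin i $ k) \<le> w k"
    proof (rule degree_le, intro allI impI)
      fix n assume "w k < n"
      then have "degree (P $$ (i,j)) < n + pos \<alpha> k * d" using wl PD by linarith
      then show "coeff (lin i $ k) n = 0" unfolding c by (rule coeff_eq_0)
    qed
    moreover have "coeff (lin i $ k) (w k) = (if k = ki i then 1 else 0)"
      unfolding c using wl PD ki_iff[OF k i] True j_def by (simp add: add.commute)
    ultimately show ?thesis ..
  next
    case False
    have wd: "w k = d" using w_nonlast[OF k] False j_def by auto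
    have c: "coeff (lin i $ k) n = (if n < d then coeff (P $$ (i,j)) (n + pos \<alpha> k * d) else 0)" for n
      using k False j_def by (simp add: lin_def coeff_poly_shift coeff_poly_cutoff)
    have "degree (lin i $ k) \<le> w k"
      by (rule degree_le) (simp add: c wd)
    moreover have "coeff (lin i $ k) (w k) = (if k = ki i then 1 else 0)"
      unfolding c using wd ki_iff[OF k i] False j_def by simp
    ultimately show ?thesis ..
  qed
  then show "degree (lin i $ k) \<le> w k" "coeff (lin i $ k) (w k) = (if k = ki i then 1 else 0)" by auto
qed


lemma ecal_t_zero: "ecal_t (0\<^sub>v N) = 0\<^sub>v m"
  unfolding ecal_t_def by (intro eq_vecI) auto

lemma Pbar: assumes k: "k < N"
  shows "\<exists>q. dim_vec q = N \<and> interpolant Eb J q \<and>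
    (\<forall>j<N. degree (q$j) \<le> w j \<and> coeff (q$j) (w j) = (if j = k then 1 else 0))"
proof -
  define i where "i = blk \<alpha> k"
  have i: "i < m" unfolding i_def by (rule blk_props(1)[OF k])
  show ?thesis
  proof (cases "pos \<alpha> k = \<alpha> i - 1")
    case True
    then have kk: "k = ki i" using ki_iff[OF k i] i_def by simp
    show ?thesis
      by (rule exI[of _ "lin i"]) (use lin_int[OF i] lin_coeff[OF i] kk in \<open>auto simp: lin_def\<close>)
  next
    case False
    define p where "p = pos \<alpha> k"
    have pa: "Suc p < \<alpha> i" using blk_props(5)[OF k] False unfolding p_def i_def by linarith
    have ke: "k = st \<alpha> i + p" using blk_props(4)[OF k] unfolding p_def i_def .
    have k1: "Suc k = st \<alpha> i + Suc p" using ke by simp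
    have k1N: "Suc k < N" unfolding k1 by (rule st_lt[of i m "Suc p" \<alpha>, OF i pa])
    have bk1: "blk \<alpha> (Suc k) = i" and pk1: "pos \<alpha> (Suc k) = Suc p"
      unfolding k1 using blk_eq[of "Suc p" \<alpha> i, OF pa] by auto
    have wk: "w k = d" using w_nonlast[OF k] False i_def by auto
    define g where "g = vec N (\<lambda>k'. if k' = k then monom 1 d else if k' = Suc k then -1 else (0 :: 'a poly))"
    define flag where "flag = (w (Suc k) = 0)"
    define q where "q = g + (if flag then lin i else 0\<^sub>v N)"
    have dg: "dim_vec g = N" unfolding g_def by simp
    have dq: "dim_vec q = N" unfolding q_def g_def by (simp add: lin_def)
    have eg: "ecal_t g = 0\<^sub>v m"
    proof (rule eq_vecI)
      fix j assume "j < dim_vec (0\<^sub>v m :: 'a poly vec)"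
      then have j: "j < m" by simp
      have "(\<Sum>k'<N. Ec $$ (k',j) * g $ k') = (\<Sum>k'\<in>{k, Suc k}. Ec $$ (k',j) * g $ k')"
        by (rule sum.mono_neutral_right) (use k k1N in \<open>auto simp: g_def\<close>)
      also have "\<dots> = Ec $$ (k,j) * monom 1 d - Ec $$ (Suc k,j)"
        using k k1N by (simp add: g_def)
      also have "\<dots> = 0"
        using k k1N j bk1 pk1 by (simp add: Ec_entry i_def[symmetric] p_def[symmetric] mult_monom add.commute)
      finally show "ecal_t g $ j = 0\<^sub>v m $ j" using j by (simp add: ecal_t_def)
    qed (simp add: ecal_t_def)
    have ecq: "ecal_t q = (if flag then row P i else 0\<^sub>v m)"
    proof -
      have "ecal_t q = ecal_t g + ecal_t (if flag then lin i else 0\<^sub>v N)"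
        unfolding q_def by (rule ecal_t_add[OF dg]) (simp add: lin_def)
      also have "\<dots> = (if flag then row P i else 0\<^sub>v m)"
        using Pc i by (auto simp: eg lin_ecal ecal_t_zero)
      finally show ?thesis .
    qed
    have intq: "interpolant Eb J q"
      using Mbar_iff[OF dq] ecq P_int[OF i] interpolant_zero by simp
    have fl: "flag \<Longrightarrow> Suc k = ki i"
    proof -
      assume flag
      then have "pos \<alpha> (Suc k) = \<alpha> (blk \<alpha> (Suc k)) - 1"
        using w_nonlast(1)[OF k1N] d_pos unfolding flag_def by fastforce
      then show "Suc k = ki i" using ki_iff[OF k1N i] bk1 by simp
    qed
    have "\<forall>j<N. degree (q$j) \<le> w j \<and> coeff (q$j) (w j) = (if j = k then 1 else 0)"
    proof (intro allI impI)
      fix j assume j: "j < N"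
      have qj: "q $ j = g $ j + (if flag then lin i $ j else 0)" unfolding q_def using j dg by (simp add: lin_def)
      have dl: "degree (if flag then lin i $ j else 0) \<le> w j" using lin_coeff(1)[OF i j] by simp
      have cl: "coeff (if flag then lin i $ j else 0) (w j) = (if flag \<and> j = Suc k then 1 else 0)"
        using lin_coeff(2)[OF i j] fl by auto
      have dgj: "degree (g $ j) \<le> w j" using j wk by (simp add: g_def degree_monom_eq)
      have cg: "coeff (g $ j) (w j) = (if j = k then 1 else if j = Suc k \<and> flag then -1 else 0)"
        using j wk unfolding g_def flag_def by (auto simp: coeff_monom)
      have "degree (q $ j) \<le> w j" unfolding qj by (rule degree_add_le[OF dgj dl])
      moreover have "coeff (q$j) (w j) = (if j = k then 1 else 0)"
        unfolding qj coeff_add cg cl by auto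
      ultimately show "degree (q$j) \<le> w j \<and> coeff (q$j) (w j) = (if j = k then 1 else 0)" ..
    qed
    then show ?thesis using dq intq by blast
  qed
qed


abbreviation "sh \<equiv> (\<lambda>k. - int (w k))"
abbreviation "L \<equiv> lm sh R"

lemma R_basis: "interp_basis Eb J R" and R_frr: "full_row_rank L"
  using R unfolding s_minimal_interp_basis_def s_reduced_def by auto

lemma Rc: "R \<in> carrier_mat N N"
  using R_basis Eb_carrier unfolding interp_basis_def by auto

lemma Lc: "L \<in> carrier_mat N N"
  using Rc unfolding lm_def by auto

lemma R_int: "i < N \<Longrightarrow> interpolant Eb J (row R i)"
  using R_basis Eb_carrier unfolding interp_basis_def by auto

lemma R_span: "interpolant Eb J p \<Longrightarrow> \<exists>v. dim_vec v = N \<and> p = transpose_mat R *\<^sub>v v"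
  using R_basis Eb_carrier unfolding interp_basis_def by auto

lemma R_indep: "dim_vec v = N \<Longrightarrow> transpose_mat R *\<^sub>v v = 0\<^sub>v N \<Longrightarrow> v = 0\<^sub>v N"
  using R_basis Eb_carrier unfolding interp_basis_def by auto

lemma R_row_nz: assumes i: "i < N" shows "row R i \<noteq> 0\<^sub>v N"
proof
  assume z: "row R i = 0\<^sub>v N"
  have "transpose_mat R *\<^sub>v unit_vec N i = 0\<^sub>v N"
  proof (rule eq_vecI)
    fix j assume "j < dim_vec (0\<^sub>v N :: 'a poly vec)"
    then have j: "j < N" by simp
    have "R $$ (i,j) = row R i $ j" using j i Rc by simp
    also have "\<dots> = 0" using z j by simp
    finally have Rij: "R $$ (i,j) = 0" .
    have "(transpose_mat R *\<^sub>v unit_vec N i) $ j = (\<Sum>i'<N. R $$ (i',j) * unit_vec N i $ i')"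
      by (rule tmv_entry[OF Rc j]) simp
    also have "\<dots> = R $$ (i,j) * unit_vec N i $ i"
      by (rule sum_single) (use i in simp_all)
    finally show "(transpose_mat R *\<^sub>v unit_vec N i) $ j = 0\<^sub>v N $ j" using Rij j by simp
  qed (use Rc in simp)
  then have "unit_vec N i = (0\<^sub>v N :: 'a poly vec)" by (rule R_indep[rotated]) simp
  then have "unit_vec N i $ i = (0\<^sub>v N :: 'a poly vec) $ i" by simp
  then show False using i by simp
qed

definition rr :: "nat \<Rightarrow> nat" where "rr i = nat (rdeg sh (row R i))"

lemma R_deg: assumes i: "i < N"
  shows "rdeg sh (row R i) \<ge> 0" "\<And>j. j < N \<Longrightarrow> degree (R $$ (i,j)) \<le> rr i + w j"
    "\<And>j. j < N \<Longrightarrow> L $$ (i,j) = coeff (R $$ (i,j)) (rr i + w j)"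
proof -
  define S where "S = {int (degree (row R i $ j)) + sh j | j. j < dim_vec (row R i) \<and> row R i $ j \<noteq> 0}"
  have rd: "rdeg sh (row R i) = Max S" unfolding rdeg_def S_def ..
  have dr: "dim_vec (row R i) = N" using Rc by simp
  have ent: "\<And>j. j < N \<Longrightarrow> row R i $ j = R $$ (i,j)" using Rc i by simp
  have fin: "finite S" unfolding S_def by simp
  have "\<exists>k<N. \<exists>n\<ge>w k. coeff (row R i $ k) n \<noteq> 0"
  proof (rule ccontr)
    assume "\<not> ?thesis"
    then have "row R i = 0\<^sub>v N" by (intro Mbar_lower[OF R_int[OF i]]) auto
    then show False using R_row_nz[OF i] by simp
  qed
  then obtain k n where k: "k < N" "n \<ge> w k" "coeff (row R i $ k) n \<noteq> 0" by blast
  then have nz: "row R i $ k \<noteq> 0" by auto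
  have "n \<le> degree (row R i $ k)" using k(3) by (rule le_degree)
  then have elem: "int (degree (row R i $ k)) + sh k \<ge> 0" using k(2) by simp
  have "int (degree (row R i $ k)) + sh k \<in> S" unfolding S_def using k nz dr by auto
  then have "int (degree (row R i $ k)) + sh k \<le> Max S" by (rule Max_ge[OF fin])
  then show r0: "rdeg sh (row R i) \<ge> 0" using elem rd by linarith
  fix j assume j: "j < N"
  show "degree (R $$ (i,j)) \<le> rr i + w j"
  proof (cases "R $$ (i,j) = 0")
    case True then show ?thesis by simp
  next
    case False
    have "row R i $ j \<noteq> 0" using False ent[OF j] by simp
    then have "int (degree (row R i $ j)) + sh j \<in> S" unfolding S_def
      by (intro CollectI exI[of _ j] conjI refl) (use j dr in simp_all)
    then have "int (degree (row R i $ j)) + sh j \<le> rdeg sh (row R i)" unfolding rd by (rule Max_ge[OF fin])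
    moreover have "int (rr i) = rdeg sh (row R i)" unfolding rr_def using r0 by simp
    ultimately have "int (degree (R $$ (i,j))) \<le> int (rr i + w j)" unfolding ent[OF j] by simp
    then show ?thesis by (simp only: of_nat_le_iff)
  qed
  have e: "rdeg sh (row R i) - sh j = int (rr i + w j)" using r0 unfolding rr_def by simp
  have "L $$ (i,j) = (if rdeg sh (row R i) - sh j < 0 then 0
              else coeff (R $$ (i,j)) (nat (rdeg sh (row R i) - sh j)))"
    using i j Rc unfolding lm_def by (simp only: index_mat carrier_matD split: prod.split) simp
  then show "L $$ (i,j) = coeff (R $$ (i,j)) (rr i + w j)" unfolding e nat_int by simp
qed

lemma Cm_row: assumes k: "k < N"
  shows "\<exists>c. dim_vec c = N \<and> (\<forall>i<N. c$i \<noteq> 0 \<longrightarrow> rr i = 0) \<and>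
     (\<forall>j<N. (\<Sum>i<N. c$i * L $$ (i,j)) = (if j = k then 1 else 0))"
proof -
  obtain q where q: "dim_vec q = N" "interpolant Eb J q"
    "\<forall>j<N. degree (q$j) \<le> w j \<and> coeff (q$j) (w j) = (if j = k then 1 else 0)"
    using Pbar[OF k] by blast
  obtain u where u: "dim_vec u = N" "q = transpose_mat R *\<^sub>v u" using R_span[OF q(2)] by blast
  have u0: "u \<noteq> 0\<^sub>v N"
  proof
    assume "u = 0\<^sub>v N"
    then have "q $ k = 0" unfolding u(2) using Rc k by (simp add: tmv_entry)
    then show False using q(3) k by auto
  qed
  have frr: "c = 0\<^sub>v N" if c: "dim_vec c = N"
      and h: "\<And>j. j < N \<Longrightarrow> (\<Sum>i<N. c$i * coeff (R$$(i,j)) (rr i + w j)) = 0" for c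
  proof -
    have "transpose_mat L *\<^sub>v c = 0\<^sub>v (dim_col L)"
    proof (rule eq_vecI)
      fix j assume "j < dim_vec (0\<^sub>v (dim_col L) :: 'a vec)"
      then have j: "j < N" using Lc by simp
      have "(transpose_mat L *\<^sub>v c) $ j = (\<Sum>i<N. L $$ (i,j) * c $ i)" by (rule tmv_entry[OF Lc j c])
      also have "\<dots> = (\<Sum>i<N. c$i * coeff (R$$(i,j)) (rr i + w j))"
        using j by (intro sum.cong refl) (simp add: R_deg(3) mult.commute)
      finally show "(transpose_mat L *\<^sub>v c) $ j = 0\<^sub>v (dim_col L) $ j" using h[OF j] j Lc by simp
    qed (use Lc in simp)
    then show ?thesis using R_frr c Lc unfolding full_row_rank_def by auto
  qed
  have "\<exists>t. (\<forall>i<N. u$i \<noteq> 0 \<longrightarrow> degree (u$i) + rr i \<le> t) \<and>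
     (\<forall>j<N. degree ((transpose_mat R *\<^sub>v u)$j) \<le> t + w j) \<and>
     (\<forall>j<N. coeff ((transpose_mat R *\<^sub>v u)$j) (t + w j) =
        (\<Sum>i<N. (if rr i \<le> t then coeff (u$i) (t - rr i) else 0) * coeff (R$$(i,j)) (rr i + w j))) \<and>
     (\<exists>j<N. coeff ((transpose_mat R *\<^sub>v u)$j) (t + w j) \<noteq> 0)"
  proof (rule lead[OF Rc u(1) u0])
    show "\<And>i j. i < N \<Longrightarrow> j < N \<Longrightarrow> degree (R $$ (i, j)) \<le> rr i + w j" by (rule R_deg(2))
    show "\<And>c. dim_vec c = N \<Longrightarrow> (\<And>j. j < N \<Longrightarrow> (\<Sum>i<N. c $ i * coeff (R $$ (i, j)) (rr i + w j)) = 0) \<Longrightarrow> c = 0\<^sub>v N"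
      by (rule frr)
  qed
  then obtain t where t: "\<forall>i<N. u$i \<noteq> 0 \<longrightarrow> degree (u$i) + rr i \<le> t"
     "\<forall>j<N. coeff ((transpose_mat R *\<^sub>v u)$j) (t + w j) =
        (\<Sum>i<N. (if rr i \<le> t then coeff (u$i) (t - rr i) else 0) * coeff (R$$(i,j)) (rr i + w j))"
     "\<exists>j<N. coeff ((transpose_mat R *\<^sub>v u)$j) (t + w j) \<noteq> 0"
    by blast
  from t(3) obtain j where j: "j < N" "coeff (q $ j) (t + w j) \<noteq> 0" unfolding u(2) by blast
  have "t + w j \<le> degree (q $ j)" using j(2) by (rule le_degree)
  then have t0: "t = 0" using q(3) j(1) by fastforce
  define c where "c = vec N (\<lambda>i. if rr i \<le> 0 then coeff (u$i) 0 else 0)"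
  have "dim_vec c = N" unfolding c_def by simp
  moreover have "\<forall>i<N. c$i \<noteq> 0 \<longrightarrow> rr i = 0" unfolding c_def by auto
  moreover have "\<forall>j<N. (\<Sum>i<N. c$i * L $$ (i,j)) = (if j = k then 1 else 0)"
  proof (intro allI impI)
    fix j assume j: "j < N"
    have e: "coeff (q $ j) (t + w j) =
        (\<Sum>i<N. (if rr i \<le> t then coeff (u$i) (t - rr i) else 0) * coeff (R$$(i,j)) (rr i + w j))"
      using t(2) j unfolding u(2) by blast
    note e' = e[unfolded t0]
    have "(\<Sum>i<N. c$i * L $$ (i,j)) = coeff (q $ j) (0 + w j)"
      unfolding e' c_def using j by (intro sum.cong refl) (simp add: R_deg(3))
    then have "(\<Sum>i<N. c$i * L $$ (i,j)) = coeff (q $ j) (t + w j)" using t0 by simp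
    also have "\<dots> = (if j = k then 1 else 0)" using q(3) j t0 by simp
    finally show "(\<Sum>i<N. c$i * L $$ (i,j)) = (if j = k then 1 else 0)" .
  qed
  ultimately show ?thesis by blast
qed


lemma Cinv_rr0: "(\<forall>i<N. rr i = 0) \<and> (\<exists>C. mat_inverse L = Some C \<and> C \<in> carrier_mat N N \<and> C * L = 1\<^sub>m N)"
proof -
  define cf where "cf k = (SOME c. dim_vec c = N \<and> (\<forall>i<N. c$i \<noteq> 0 \<longrightarrow> rr i = 0) \<and>
     (\<forall>j<N. (\<Sum>i<N. c$i * L $$ (i,j)) = (if j = k then 1 else 0)))" for k
  have cf: "dim_vec (cf k) = N \<and> (\<forall>i<N. cf k $i \<noteq> 0 \<longrightarrow> rr i = 0) \<and>
     (\<forall>j<N. (\<Sum>i<N. cf k $i * L $$ (i,j)) = (if j = k then 1 else 0))" if k: "k < N" for k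
    unfolding cf_def by (rule someI_ex[OF Cm_row[OF k]])
  define Cm where "Cm = mat N N (\<lambda>(k,i). cf k $ i)"
  have Cmc: "Cm \<in> carrier_mat N N" unfolding Cm_def by simp
  have CmL: "Cm * L = 1\<^sub>m N"
  proof (rule eq_matI)
    fix k j assume "k < dim_row (1\<^sub>m N :: 'a mat)" "j < dim_col (1\<^sub>m N :: 'a mat)"
    then have k: "k < N" and j: "j < N" by auto
    have "(Cm * L) $$ (k,j) = (\<Sum>i<N. cf k $ i * L $$ (i,j))"
      using k j Cmc Lc unfolding Cm_def by (simp add: scalar_prod_def atLeast0LessThan)
    also have "\<dots> = (if j = k then 1 else 0)" using cf[OF k] j by blast
    finally show "(Cm * L) $$ (k,j) = 1\<^sub>m N $$ (k,j)" using k j by simp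
  qed (use Cmc Lc in auto)
  have LCm: "L * Cm = 1\<^sub>m N" by (rule mat_mult_left_right_inverse[OF Cmc Lc CmL])
  have rr0: "\<forall>i<N. rr i = 0"
  proof (intro allI impI)
    fix i assume i: "i < N"
    have "(L * Cm) $$ (i,i) = 1" using LCm i by simp
    moreover have "(L * Cm) $$ (i,i) = (\<Sum>k<N. L $$ (i,k) * cf k $ i)"
      using i Cmc Lc unfolding Cm_def by (simp add: scalar_prod_def atLeast0LessThan)
    ultimately have "(\<Sum>k<N. L $$ (i,k) * cf k $ i) \<noteq> 0" by simp
    then obtain k where k: "k < N" "cf k $ i \<noteq> 0"
      by (metis (no_types, lifting) lessThan_iff mult_zero_right sum.neutral)
    then show "rr i = 0" using cf[OF k(1)] i by blast
  qed
  have "det Cm * det L = 1" using det_mult[OF Cmc Lc] CmL by simp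
  then have "det L \<noteq> 0" by auto
  then have U: "L \<in> Units (ring_mat TYPE('a) N undefined)" by (rule det_non_zero_imp_unit[OF Lc])
  obtain C where C: "mat_inverse L = Some C"
    using mat_inverse(1)[OF Lc, of undefined] U by (cases "mat_inverse L") auto
  then have "C \<in> carrier_mat N N \<and> C * L = 1\<^sub>m N" using mat_inverse(2)[OF Lc C] by auto
  then show ?thesis using rr0 C by blast
qed


definition "Cc = the (mat_inverse L)"
definition "Q = map_mat (\<lambda>c. [:c:]) Cc * R"
definition "T = Q * Ec"
definition "Sm = mat m m (\<lambda>(i,j). T $$ (ki i, j))"

lemma Cc: "Cc \<in> carrier_mat N N" "Cc * L = 1\<^sub>m N" and rr0: "\<And>i. i < N \<Longrightarrow> rr i = 0"
  using Cinv_rr0 unfolding Cc_def by auto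

lemma Qc: "Q \<in> carrier_mat N N" unfolding Q_def using Cc Rc by auto

lemma Q_entry: "k < N \<Longrightarrow> j < N \<Longrightarrow> Q $$ (k,j) = (\<Sum>i<N. R $$ (i,j) * [:Cc $$ (k,i):])"
  unfolding Q_def using Cc Rc by (simp add: scalar_prod_def atLeast0LessThan mult.commute)

lemma Q_coeff: assumes k: "k < N" and j: "j < N"
  shows "degree (Q $$ (k,j)) \<le> w j" "coeff (Q $$ (k,j)) (w j) = (if k = j then 1 else 0)"
proof -
  have c: "coeff (Q $$ (k,j)) n = (\<Sum>i<N. Cc $$ (k,i) * coeff (R $$ (i,j)) n)" for n
    unfolding Q_entry[OF k j] coeff_sum by (simp add: mult.commute)
  show "degree (Q $$ (k,j)) \<le> w j"
  proof (rule degree_le, intro allI impI)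
    fix n assume n: "w j < n"
    have "\<forall>i\<in>{..<N}. coeff (R $$ (i,j)) n = 0"
    proof
      fix i assume "i \<in> {..<N}"
      then have i: "i < N" by simp
      have "degree (R $$ (i,j)) \<le> w j" using R_deg(2)[OF i j] rr0[OF i] by simp
      then show "coeff (R $$ (i,j)) n = 0" using n by (intro coeff_eq_0) simp
    qed
    then show "coeff (Q $$ (k,j)) n = 0" unfolding c by simp
  qed
  have "coeff (Q $$ (k,j)) (w j) = (\<Sum>i<N. Cc $$ (k,i) * L $$ (i,j))"
    unfolding c using R_deg(3)[OF _ j] rr0 by (intro sum.cong refl) simp
  also have "\<dots> = (Cc * L) $$ (k,j)" using Cc(1) Lc k j by (simp add: scalar_prod_def atLeast0LessThan)
  also have "\<dots> = (if k = j then 1 else 0)" using Cc(2) k j by simp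
  finally show "coeff (Q $$ (k,j)) (w j) = (if k = j then 1 else 0)" .
qed

lemma Q_int: assumes k: "k < N" shows "interpolant Eb J (row Q k)"
proof -
  have "row_act J (row Q k) Eb = row_act J (vec N (\<lambda>i. [:Cc $$ (k,i):])) (mat_act J R Eb)"
    by (rule transfer[OF J Rc Eb_carrier]) (use Qc k in \<open>simp_all add: Q_entry\<close>)
  also have "\<dots> = 0\<^sub>v (dim_col Eb)"
    by (rule row_act_zero_rows) (use R_int Rc in \<open>auto simp: interpolant_def\<close>)
  finally show ?thesis unfolding interpolant_def using Qc Eb_carrier by simp
qed

lemma Sm_int: assumes i: "i < m" shows "interpolant E J (row Sm i)"
proof -
  have ki: "ki i < N" using ki_props[OF i] by simp
  have "row_act J (row Sm i) E = row_act J (row Q (ki i)) Eb"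
  proof (rule transfer[OF J Ec_carrier E])
    show "dim_vec (row Q (ki i)) = N" using Qc by simp
    show "dim_vec (row Sm i) = m" unfolding Sm_def by simp
    fix j assume j: "j < m"
    show "row Sm i $ j = (\<Sum>k<N. Ec $$ (k, j) * row Q (ki i) $ k)"
      using i j ki Qc Ec_carrier unfolding Sm_def T_def by (simp add: scalar_prod_def atLeast0LessThan mult.commute)
  qed
  also have "\<dots> = 0\<^sub>v (dim_col Eb)" using Q_int[OF ki] unfolding interpolant_def by simp
  finally show ?thesis unfolding interpolant_def using E Eb_carrier by (simp add: Sm_def)
qed

lemma Sm_coeff: assumes i: "i < m" and j: "j < m" and n: "dlt j \<le> n"
  shows "coeff (Sm $$ (i,j)) n = (if n = dlt j \<and> i = j then 1 else 0)"
proof -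
  have ki: "ki i < N" using ki_props[OF i] by simp
  have kj: "ki j < N" "blk \<alpha> (ki j) = j" "pos \<alpha> (ki j) = \<alpha> j - 1" using ki_props[OF j] by auto
  have "Sm $$ (i,j) = (\<Sum>k<N. Ec $$ (k, j) * Q $$ (ki i, k))"
    using i j ki Qc Ec_carrier unfolding Sm_def T_def by (simp add: scalar_prod_def atLeast0LessThan mult.commute)
  then have "coeff (Sm $$ (i,j)) n = (\<Sum>k<N. coeff (Ec $$ (k, j) * Q $$ (ki i, k)) n)"
    by (simp add: coeff_sum)
  also have "\<dots> = coeff (Ec $$ (ki j, j) * Q $$ (ki i, ki j)) n"
  proof (rule sum_single)
    fix k assume "k \<in> {..<N}" and ne: "k \<noteq> ki j"
    then have k: "k < N" by simp
    show "coeff (Ec $$ (k, j) * Q $$ (ki i, k)) n = 0"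
    proof (cases "j = blk \<alpha> k \<and> pos \<alpha> k * d \<le> n")
      case False then show ?thesis by (subst coeff_Ec[OF k j]) (rule if_not_P[OF False])
    next
      case True
      have ge: "pos \<alpha> k * d + w k \<le> n" using w_bound[OF k] n True by simp
      have "coeff (Q $$ (ki i, k)) (n - pos \<alpha> k * d) = 0"
      proof (cases "n - pos \<alpha> k * d = w k")
        case True
        have "ki i \<noteq> k"
        proof
          assume h: "ki i = k"
          have b: "blk \<alpha> k = i" using ki_props(2)[OF i] h by simp
          then have "blk \<alpha> k = i" "pos \<alpha> k = \<alpha> (blk \<alpha> k) - 1" using ki_props(3)[OF i] h by simp_all
          then have "k = ki j" using ki_iff[OF k j] \<open>j = blk \<alpha> k \<and> pos \<alpha> k * d \<le> n\<close> by simp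
          then show False using ne by simp
        qed
        then show ?thesis using True Q_coeff(2)[OF ki k] by simp
      next
        case False
        then have "w k < n - pos \<alpha> k * d" using ge by linarith
        then show ?thesis using Q_coeff(1)[OF ki k] by (intro coeff_eq_0) linarith
      qed
      then show ?thesis by (subst coeff_Ec[OF k j]) simp
    qed
  qed (use kj in auto)
  also have "\<dots> = coeff (Q $$ (ki i, ki j)) (n - pos \<alpha> (ki j) * d)"
  proof -
    have "pos \<alpha> (ki j) * d + w (ki j) = dlt j" using w_last[OF kj(1)] kj by simp
    then have "pos \<alpha> (ki j) * d \<le> n" using n by linarith
    then show ?thesis using kj by (subst coeff_Ec[OF kj(1) j]) simp
  qed
  also have "\<dots> = (if n = dlt j \<and> i = j then 1 else 0)"
  proof -
    have e: "pos \<alpha> (ki j) * d + w (ki j) = dlt j" using w_last[OF kj(1)] kj by simp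
    have kk: "ki i = ki j \<longleftrightarrow> i = j" using ki_props(2)[OF i] kj(2) by metis
    show ?thesis
    proof (cases "n = dlt j")
      case True
      then have "n - pos \<alpha> (ki j) * d = w (ki j)" using e by linarith
      then show ?thesis using Q_coeff(2)[OF ki kj(1)] True kk by simp
    next
      case False
      then have "w (ki j) < n - pos \<alpha> (ki j) * d" using e n by linarith
      then have "coeff (Q $$ (ki i, ki j)) (n - pos \<alpha> (ki j) * d) = 0"
        using Q_coeff(1)[OF ki kj(1)] by (intro coeff_eq_0) linarith
      then show ?thesis using False by simp
    qed
  qed
  finally show ?thesis .
qed

lemma Sm_eq_P: "Sm = P"
proof (rule eq_matI)
  fix i j assume "i < dim_row P" "j < dim_col P"
  then have i: "i < m" and j: "j < m" using Pc by auto
  have dS: "dim_vec (row Sm i) = m" and dP: "dim_vec (row P i) = m" using Pc by (auto simp: Sm_def)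
  have "interpolant E J (row Sm i - row P i)"
    unfolding interpolant_def
    using row_act_diff[OF J E dS dP] Sm_int[OF i] P_int[OF i] E dS by (simp add: interpolant_def)
  moreover have "coeff ((row Sm i - row P i) $ j') n = 0" if j': "j' < m" and n: "dlt j' \<le> n" for j' n
  proof -
    have "(row Sm i - row P i) $ j' = Sm $$ (i,j') - P $$ (i,j')" using i j' Pc by (simp add: Sm_def)
    moreover have "coeff (P $$ (i,j')) n = (if n = dlt j' \<and> i = j' then 1 else 0)"
    proof (cases "n = dlt j'")
      case True then show ?thesis using P_coeff(2)[OF i j'] by simp
    next
      case False
      then have "degree (P $$ (i,j')) < n" using P_coeff(1)[OF i j'] n by linarith
      then show ?thesis using False by (simp add: coeff_eq_0)
    qed
    ultimately show ?thesis using Sm_coeff[OF i j' n] by simp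
  qed
  ultimately have "row Sm i - row P i = 0\<^sub>v m" by (rule M_lower)
  then have "(row Sm i - row P i) $ j = 0" using j by simp
  then show "Sm $$ (i,j) = P $$ (i,j)" using i j Pc by (simp add: Sm_def)
qed (use Pc in \<open>auto simp: Sm_def\<close>)

lemma final: "s_popov_interp_basis E J s
    (let T = map_mat (\<lambda>c. [:c:]) (the (mat_inverse (lm (\<lambda>k. - int (dbar \<alpha> \<beta> d k)) R)))
             * R * Ecal m \<alpha> d
     in mat m m (\<lambda>(i,j). T $$ ((\<Sum>k\<le>i. \<alpha> k) - 1, j)))"
proof -
  have "(let T = map_mat (\<lambda>c. [:c:]) (the (mat_inverse (lm (\<lambda>k. - int (dbar \<alpha> \<beta> d k)) R)))
             * R * Ecal m \<alpha> d
     in mat m m (\<lambda>(i,j). T $$ ((\<Sum>k\<le>i. \<alpha> k) - 1, j))) = Sm"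
    unfolding Sm_def T_def Q_def Cc_def Let_def
    by (rule eq_matI) (simp_all add: ki_props(4)[unfolded One_nat_def])
  then show ?thesis using Sm_eq_P P by simp
qed

end

theorem lemma4p2:
  fixes E J :: "'a::field mat" and s :: "nat \<Rightarrow> int"
    and dlt \<alpha> \<beta> :: "nat \<Rightarrow> nat" and m \<sigma> d :: nat and R :: "'a poly mat"
  assumes E: "E \<in> carrier_mat m \<sigma>" and J: "J \<in> carrier_mat \<sigma> \<sigma>"
    and mindeg: "s_minimal_degree E J s dlt"
    and d_def: "d = nat \<lceil>real \<sigma> / real m\<rceil>" and d_pos: "d \<ge> 1"
    and decomp: "\<forall>i<m. 1 \<le> \<alpha> i \<and> \<beta> i < d \<and> dlt i = (\<alpha> i - 1) * d + \<beta> i"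
    and R: "s_minimal_interp_basis (mat_act J (Ecal m \<alpha> d) E) J
              (\<lambda>k. - int (dbar \<alpha> \<beta> d k)) R"
  shows "s_popov_interp_basis E J s
    (let T = map_mat (\<lambda>c. [:c:]) (the (mat_inverse (lm (\<lambda>k. - int (dbar \<alpha> \<beta> d k)) R)))
             * R * Ecal m \<alpha> d
     in mat m m (\<lambda>(i,j). T $$ ((\<Sum>k\<le>i. \<alpha> k) - 1, j)))"
proof -
  obtain P where P: "s_popov_interp_basis E J s P" "\<forall>i<dim_row E. dlt i = degree (P $$ (i,i))"
    using mindeg unfolding s_minimal_degree_def by blast
  have Pd: "\<forall>i<m. dlt i = degree (P $$ (i,i))" using P(2) E by simp
  interpret lin_setup E J s dlt \<alpha> \<beta> m \<sigma> d R P
    by (rule lin_setup.intro[OF E J d_pos decomp R P(1) Pd])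
  show ?thesis by (rule final)
qed

end
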